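(* Let $T$ be a tree with diameter $d$, and let $k$ be an integer with $1\le k\le d-1$. Then the $k$th power $T^k$ contains a $(k+1)^+$-branching spanning tree.
   Context: All graphs are finite, simple, undirected. In a tree, vertices of degree $1$ are leaves and all other vertices are internal vertices. For an integer $m$, a tree is $m^+$-branching if every internal vertex has degree at least $m$. For a graph $G=(V,E)$ and $k\in\mathbb{N}$, the $k$th power $G^k$ is the graph on vertex set $V$ in which $u\ne v$ are adjacent iff $d_G(u,v)\le k$ (distance in $G$). The diameter is the maximum distance between two vertices. *)

theory Defs
  imports Main
begin

definition is_graph :: "'a set \<Rightarrow> 'a set set \<Rightarrow> bool" where
  "is_graph V E \<longleftrightarrow> finite V \<and> (\<forall>e\<in>E. \<exists>u v. u \<in> V \<and> v \<in> V \<and> u \<noteq> v \<and> e = {u, v})"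

definition walk :: "'a set \<Rightarrow> 'a set set \<Rightarrow> 'a list \<Rightarrow> bool" where
  "walk V E xs \<longleftrightarrow> xs \<noteq> [] \<and> set xs \<subseteq> V \<and>
     (\<forall>i. Suc i < length xs \<longrightarrow> {xs ! i, xs ! Suc i} \<in> E)"

definition connected_graph :: "'a set \<Rightarrow> 'a set set \<Rightarrow> bool" where
  "connected_graph V E \<longleftrightarrow>
     (\<forall>u\<in>V. \<forall>v\<in>V. \<exists>xs. walk V E xs \<and> hd xs = u \<and> last xs = v)"

definition is_cycle :: "'a set \<Rightarrow> 'a set set \<Rightarrow> 'a list \<Rightarrow> bool" where
  "is_cycle V E xs \<longleftrightarrow> length xs \<ge> 3 \<and> distinct xs \<and> walk V E xs \<and> {last xs, hd xs} \<in> E"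

definition is_tree :: "'a set \<Rightarrow> 'a set set \<Rightarrow> bool" where
  "is_tree V E \<longleftrightarrow> is_graph V E \<and> V \<noteq> {} \<and> connected_graph V E \<and> \<not> (\<exists>xs. is_cycle V E xs)"

text \<open>Distance: number of edges of a shortest walk (meaningful in connected graphs).\<close>
definition gdist :: "'a set \<Rightarrow> 'a set set \<Rightarrow> 'a \<Rightarrow> 'a \<Rightarrow> nat" where
  "gdist V E u v = (LEAST n. \<exists>xs. walk V E xs \<and> hd xs = u \<and> last xs = v \<and> length xs = Suc n)"

definition diameter :: "'a set \<Rightarrow> 'a set set \<Rightarrow> nat" where
  "diameter V E = Max {gdist V E u v | u v. u \<in> V \<and> v \<in> V}"

definition degree :: "'a set \<Rightarrow> 'a set set \<Rightarrow> 'a \<Rightarrow> nat" where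
  "degree V E v = card {u \<in> V. {u, v} \<in> E}"

definition graph_power :: "'a set \<Rightarrow> 'a set set \<Rightarrow> nat \<Rightarrow> 'a set set" where
  "graph_power V E k = {{u, v} | u v. u \<in> V \<and> v \<in> V \<and> u \<noteq> v \<and> gdist V E u v \<le> k}"

definition branching :: "nat \<Rightarrow> 'a set \<Rightarrow> 'a set set \<Rightarrow> bool" where
  "branching m V E \<longleftrightarrow> (\<forall>v\<in>V. degree V E v \<noteq> 1 \<longrightarrow> degree V E v \<ge> m)"

definition spanning_tree :: "'a set \<Rightarrow> 'a set set \<Rightarrow> 'a set set \<Rightarrow> bool" where
  "spanning_tree V E F \<longleftrightarrow> F \<subseteq> E \<and> is_tree V F"

end

theory Submission
  imports Defs
begin


lemma walk_single[simp]: "walk V E [x] \<longleftrightarrow> x \<in> V"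
  unfolding walk_def by auto

lemma walk_Cons_Cons[simp]:
  "walk V E (x # y # xs) \<longleftrightarrow> x \<in> V \<and> {x,y} \<in> E \<and> walk V E (y # xs)"
proof
  assume w: "walk V E (x # y # xs)"
  have "Suc 0 < length (x # y # xs)" by simp
  then have "{(x # y # xs) ! 0, (x # y # xs) ! Suc 0} \<in> E" using w unfolding walk_def by blast
  then have "{x,y} \<in> E" by simp
  moreover have "walk V E (y # xs)" unfolding walk_def
  proof (intro conjI allI impI)
    show "set (y # xs) \<subseteq> V" using w unfolding walk_def by auto
    fix i assume "Suc i < length (y # xs)"
    then have "Suc (Suc i) < length (x # y # xs)" by simp
    then have "{(x # y # xs) ! Suc i, (x # y # xs) ! Suc (Suc i)} \<in> E" using w unfolding walk_def by blast
    then show "{(y # xs) ! i, (y # xs) ! Suc i} \<in> E" by simp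
  qed simp
  ultimately show "x \<in> V \<and> {x,y} \<in> E \<and> walk V E (y # xs)" using w unfolding walk_def by auto
next
  assume h: "x \<in> V \<and> {x,y} \<in> E \<and> walk V E (y # xs)"
  show "walk V E (x # y # xs)" unfolding walk_def
  proof (intro conjI allI impI)
    show "set (x # y # xs) \<subseteq> V" using h unfolding walk_def by auto
    fix i assume "Suc i < length (x # y # xs)"
    then show "{(x # y # xs) ! i, (x # y # xs) ! Suc i} \<in> E"
      using h unfolding walk_def by (cases i) auto
  qed simp
qed

lemma walk_nonempty: "walk V E xs \<Longrightarrow> xs \<noteq> []" unfolding walk_def by auto

lemma walk_append:
  assumes "xs \<noteq> []" "ys \<noteq> []"
  shows "walk V E (xs @ ys) \<longleftrightarrow> walk V E xs \<and> walk V E ys \<and> {last xs, hd ys} \<in> E"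
  using assms(1)
proof (induction xs rule: list_nonempty_induct)
  case (single x)
  then show ?case using assms(2) by (cases ys) auto
next
  case (cons x xs)
  then show ?case by (cases xs) auto
qed

lemma walk_join:
  assumes "walk V E xs" "walk V E ys" "last xs = hd ys"
  shows "walk V E (xs @ tl ys)"
proof (cases ys)
  case Nil then show ?thesis using assms walk_nonempty by blast
next
  case (Cons y r)
  show ?thesis
  proof (cases r)
    case Nil then show ?thesis using assms Cons by simp
  next
    case (Cons y' r')
    then show ?thesis using assms \<open>ys = y # r\<close> walk_nonempty[OF assms(1)]
      by (subst walk_append) auto
  qed
qed

lemma walk_join_hd_last:
  assumes "walk V E xs" "walk V E ys" "last xs = hd ys"
  shows "hd (xs @ tl ys) = hd xs" "last (xs @ tl ys) = last ys"
    "length (xs @ tl ys) = length xs + length ys - 1"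
  using assms walk_nonempty[OF assms(1)] walk_nonempty[OF assms(2)]
  by (cases ys; auto simp: last_append)+

lemma walk_rev: "walk V E (rev xs) \<longleftrightarrow> walk V E xs"
proof (cases "xs = []")
  case True then show ?thesis by (simp add: walk_def)
next
  case False
  then show ?thesis
  proof (induction xs rule: list_nonempty_induct)
    case (single x) then show ?case by simp
  next
    case (cons x xs)
    have "walk V E (rev (x # xs)) = walk V E (rev xs @ [x])" by simp
    also have "\<dots> = (walk V E (rev xs) \<and> x \<in> V \<and> {hd xs, x} \<in> E)"
      using cons by (subst walk_append) (auto simp: last_rev)
    also have "\<dots> = walk V E (x # xs)" using cons
      by (cases xs) (auto simp: insert_commute)
    finally show ?case .
  qed
qed

lemma walk_take: "walk V E xs \<Longrightarrow> 0 < n \<Longrightarrow> walk V E (take n xs)"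
  unfolding walk_def by (auto dest: in_set_takeD)

lemma walk_drop: "walk V E xs \<Longrightarrow> n < length xs \<Longrightarrow> walk V E (drop n xs)"
  unfolding walk_def by (auto dest: in_set_dropD)

lemma walk_mono: "walk V' E' xs \<Longrightarrow> V' \<subseteq> V \<Longrightarrow> E' \<subseteq> E \<Longrightarrow> walk V E xs"
  unfolding walk_def by auto



lemma gdist_le:
  assumes "walk V E xs" "hd xs = a" "last xs = b" "length xs = Suc n"
  shows "gdist V E a b \<le> n"
  unfolding gdist_def by (rule Least_le) (use assms in blast)

lemma gdist_wit:
  assumes "connected_graph V E" "a \<in> V" "b \<in> V"
  shows "\<exists>xs. walk V E xs \<and> hd xs = a \<and> last xs = b \<and> length xs = Suc (gdist V E a b)"
proof -
  obtain xs where xs: "walk V E xs" "hd xs = a" "last xs = b"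
    using assms unfolding connected_graph_def by blast
  then have "length xs = Suc (length xs - 1)" using walk_nonempty by fastforce
  with xs have ex: "\<exists>n xs. walk V E xs \<and> hd xs = a \<and> last xs = b \<and> length xs = Suc n" by blast
  show ?thesis unfolding gdist_def by (rule LeastI_ex) (use ex in blast)
qed

lemma gdist_0:
  assumes "connected_graph V E" "a \<in> V" "b \<in> V" "gdist V E a b = 0"
  shows "a = b"
proof -
  obtain xs where "walk V E xs \<and> hd xs = a \<and> last xs = b \<and> length xs = Suc 0"
    using gdist_wit[OF assms(1-3)] assms(4) by auto
  then show ?thesis by (cases xs) auto
qed

lemma gdist_edge:
  assumes "{a,b} \<in> E" "a \<in> V" "b \<in> V"
  shows "gdist V E a b \<le> 1"
  using gdist_le[of V E "[a,b]" a b 1] assms by simp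

lemma gdist_sym_le:
  assumes "connected_graph V E" "a \<in> V" "b \<in> V"
  shows "gdist V E b a \<le> gdist V E a b"
proof -
  obtain xs where xs: "walk V E xs" "hd xs = a" "last xs = b" "length xs = Suc (gdist V E a b)"
    using gdist_wit[OF assms] by blast
  have "xs \<noteq> []" using xs(1) walk_nonempty by blast
  then show ?thesis using xs gdist_le[of V E "rev xs" b a "gdist V E a b"]
    by (simp add: walk_rev hd_rev last_rev)
qed

lemma gdist_sym:
  assumes "connected_graph V E" "a \<in> V" "b \<in> V"
  shows "gdist V E a b = gdist V E b a"
  using gdist_sym_le[OF assms] gdist_sym_le[OF assms(1,3,2)] by simp

lemma gdist_tri:
  assumes "connected_graph V E" "a \<in> V" "b \<in> V" "c \<in> V"
  shows "gdist V E a c \<le> gdist V E a b + gdist V E b c"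
proof -
  obtain xs where xs: "walk V E xs" "hd xs = a" "last xs = b" "length xs = Suc (gdist V E a b)"
    using gdist_wit[OF assms(1-3)] by blast
  obtain ys where ys: "walk V E ys" "hd ys = b" "last ys = c" "length ys = Suc (gdist V E b c)"
    using gdist_wit[OF assms(1,3,4)] by blast
  have "last xs = hd ys" using xs ys by simp
  note j = walk_join[OF xs(1) ys(1) this] walk_join_hd_last[OF xs(1) ys(1) this]
  show ?thesis by (rule gdist_le[OF j(1)]) (use j xs ys in auto)
qed

lemma connected_via_root:
  assumes "c \<in> V" "\<And>y. y \<in> V \<Longrightarrow> \<exists>xs. walk V F xs \<and> hd xs = y \<and> last xs = c"
  shows "connected_graph V F"
  unfolding connected_graph_def
proof (intro ballI)
  fix u v assume "u \<in> V" "v \<in> V"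
  obtain xs where xs: "walk V F xs" "hd xs = u" "last xs = c" using assms(2) \<open>u \<in> V\<close> by blast
  obtain ys where ys: "walk V F ys" "hd ys = v" "last ys = c" using assms(2) \<open>v \<in> V\<close> by blast
  have ne: "ys \<noteq> []" using ys walk_nonempty by blast
  have r: "walk V F (rev ys)" "hd (rev ys) = c" "last (rev ys) = v"
    using ys ne by (auto simp: walk_rev hd_rev last_rev)
  have "last xs = hd (rev ys)" using xs r by simp
  note j = walk_join[OF xs(1) r(1) this] walk_join_hd_last[OF xs(1) r(1) this]
  show "\<exists>xs. walk V F xs \<and> hd xs = u \<and> last xs = v"
    by (rule exI[of _ "xs @ tl (rev ys)"]) (use j xs r in auto)
qed

lemma shortest_walk_seg:
  assumes "walk V E ws" "i \<le> j" "Suc j \<le> length ws"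
  shows "gdist V E (ws ! i) (ws ! j) \<le> j - i"
proof -
  let ?s = "drop i (take (Suc j) ws)"
  have w: "walk V E ?s" using assms by (intro walk_drop walk_take) auto
  have "hd ?s = ws ! i" using assms by (subst hd_drop_conv_nth) auto
  moreover have "last ?s = ws ! j" using assms
    by (simp add: last_conv_nth) 
  moreover have "length ?s = Suc (j - i)" using assms by simp
  ultimately show ?thesis using gdist_le[OF w] by blast
qed

lemma shortest_walk_dist:
  assumes "connected_graph V E" "walk V E ws" "hd ws = a" "last ws = b"
    "length ws = Suc (gdist V E a b)" "i \<le> gdist V E a b"
  shows "gdist V E a (ws ! i) = i"
proof -
  let ?m = "gdist V E a b"
  have ne: "ws \<noteq> []" using assms walk_nonempty by blast
  have a: "ws ! 0 = a" using assms ne by (simp add: hd_conv_nth)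
  have b: "ws ! ?m = b" using assms ne by (simp add: last_conv_nth)
  have V: "set ws \<subseteq> V" using assms(2) unfolding walk_def by blast
  have li: "Suc i \<le> length ws" "Suc ?m \<le> length ws" using assms(5,6) by simp_all
  have aV: "a \<in> V" "b \<in> V" "ws ! i \<in> V"
    using V hd_in_set[OF ne] last_in_set[OF ne] nth_mem[of i ws] li assms(3,4) by auto
  have 1: "gdist V E a (ws ! i) \<le> i" using shortest_walk_seg[OF assms(2) _ li(1), of 0] a by simp
  have 2: "gdist V E (ws ! i) b \<le> ?m - i" using shortest_walk_seg[OF assms(2) assms(6) li(2)] b by simp
  have "?m \<le> gdist V E a (ws ! i) + gdist V E (ws ! i) b" using gdist_tri[OF assms(1) aV(1) aV(3) aV(2)] .
  with 1 2 assms(6) show ?thesis by linarith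
qed

lemma card_ge_gdist:
  assumes "is_graph V E" "connected_graph V E" "a \<in> V" "b \<in> V"
  shows "Suc (gdist V E a b) \<le> card V"
proof -
  let ?m = "gdist V E a b"
  obtain ws where ws: "walk V E ws" "hd ws = a" "last ws = b" "length ws = Suc ?m"
    using gdist_wit[OF assms(2-4)] by blast
  have inj: "inj_on (\<lambda>i. ws ! i) {0..?m}"
  proof (rule inj_onI)
    fix i j assume "i \<in> {0..?m}" "j \<in> {0..?m}" "ws ! i = ws ! j"
    then have ij: "i \<le> ?m" "j \<le> ?m" by simp_all
    have "i = gdist V E a (ws ! i)" by (rule shortest_walk_dist[OF assms(2) ws ij(1), symmetric])
    also have "\<dots> = gdist V E a (ws ! j)" unfolding \<open>ws ! i = ws ! j\<close> ..
    also have "\<dots> = j" by (rule shortest_walk_dist[OF assms(2) ws ij(2)])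
    finally show "i = j" .
  qed
  have sub: "(\<lambda>i. ws ! i) ` {0..?m} \<subseteq> V"
  proof
    fix x assume "x \<in> (\<lambda>i. ws ! i) ` {0..?m}"
    then obtain i where "i \<le> ?m" "x = ws ! i" by auto
    then have "x \<in> set ws" using ws(4) by simp
    then show "x \<in> V" using ws(1) unfolding walk_def by blast
  qed
  have fin: "finite V" using assms(1) unfolding is_graph_def by blast
  have "card ((\<lambda>i. ws ! i) ` {0..?m}) \<le> card V" by (rule card_mono[OF fin sub])
  then show ?thesis using card_image[OF inj] by simp
qed



lemma cycle_two_nbrs:
  assumes "is_cycle V E xs" "x \<in> set xs"
  shows "\<exists>a b. a \<noteq> b \<and> {x,a} \<in> E \<and> {x,b} \<in> E"
proof -
  let ?n = "length xs"
  have n3: "3 \<le> ?n" and dis: "distinct xs" and w: "walk V E xs" and lh: "{last xs, hd xs} \<in> E"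
    using assms(1) unfolding is_cycle_def by auto
  have ed: "{xs ! j, xs ! Suc j} \<in> E" if "Suc j < ?n" for j
    using w that unfolding walk_def by blast
  have ne: "xs \<noteq> []" using n3 by auto
  have l: "last xs = xs ! (?n - 1)" using ne by (simp add: last_conv_nth)
  have h: "hd xs = xs ! 0" using ne by (simp add: hd_conv_nth)
  have neq: "xs ! p \<noteq> xs ! q" if "p < ?n" "q < ?n" "p \<noteq> q" for p q
    using dis that by (simp add: nth_eq_iff_index_eq)
  obtain i where i: "i < ?n" "xs ! i = x" using assms(2) by (auto simp: in_set_conv_nth)
  consider "i = 0" | "i = ?n - 1" | "0 < i \<and> i < ?n - 1" using i by linarith
  then show ?thesis
  proof cases
    case 1
    have "{x, xs ! 1} \<in> E" using ed[of 0] n3 i 1 by simp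
    moreover have "{x, xs ! (?n - 1)} \<in> E" using lh l h i 1 by (simp add: insert_commute)
    moreover have "xs ! 1 \<noteq> xs ! (?n - 1)" using neq n3 by simp
    ultimately show ?thesis by blast
  next
    case 2
    have "{x, xs ! 0} \<in> E" using lh l h i 2 by simp
    moreover have "{xs ! (?n - 2), xs ! Suc (?n - 2)} \<in> E" using ed[of "?n - 2"] n3 by simp
    then have "{x, xs ! (?n - 2)} \<in> E" using i 2 n3
      by (metis Suc_diff_Suc insert_commute numeral_2_eq_2 One_nat_def diff_Suc_1 less_le_trans Suc_lessD numeral_3_eq_3 le_imp_less_Suc lessI)
    moreover have "xs ! 0 \<noteq> xs ! (?n - 2)" using neq[of 0 "?n - 2"] n3 by linarith
    ultimately show ?thesis by blast
  next
    case 3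
    have "Suc i < ?n" using 3 by linarith
    then have "{x, xs ! Suc i} \<in> E" using ed[of i] i by simp
    moreover have "{xs ! (i - 1), xs ! Suc (i - 1)} \<in> E" using ed[of "i - 1"] i 3 by simp
    then have "{x, xs ! (i - 1)} \<in> E" using i 3 by (simp add: insert_commute)
    moreover have "xs ! Suc i \<noteq> xs ! (i - 1)" using neq[of "Suc i" "i - 1"] i 3 by linarith
    ultimately show ?thesis by blast
  qed
qed


lemma star_tree:
  assumes "is_graph V E" "c \<in> V" "\<forall>y\<in>V. gdist V E c y \<le> k" "k + 2 \<le> card V"
  shows "\<exists>F. F \<subseteq> graph_power V E k \<and> is_tree V F \<and> branching (k + 1) V F"
proof -
  define F where "F = {{c, y} | y. y \<in> V \<and> y \<noteq> c}"
  have fin: "finite V" using assms(1) unfolding is_graph_def by blast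
  have nbF: "a = c" if "{y, a} \<in> F" "y \<noteq> c" for y a
    using that unfolding F_def by (auto simp: doubleton_eq_iff)
  have sub: "F \<subseteq> graph_power V E k"
    unfolding F_def graph_power_def using assms(2,3) by blast
  have g: "is_graph V F" unfolding is_graph_def F_def using fin assms(2) by blast
  have conn: "connected_graph V F"
  proof (rule connected_via_root[OF assms(2)])
    fix y assume y: "y \<in> V"
    show "\<exists>xs. walk V F xs \<and> hd xs = y \<and> last xs = c"
    proof (cases "y = c")
      case True then show ?thesis using y by (intro exI[of _ "[y]"]) simp
    next
      case False
      have "{y, c} \<in> F" unfolding F_def using y False by (auto simp: insert_commute)
      then show ?thesis using y assms(2) by (intro exI[of _ "[y, c]"]) simp
    qed
  qed
  have acyc: "\<not> (\<exists>xs. is_cycle V F xs)"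
  proof
    assume "\<exists>xs. is_cycle V F xs"
    then obtain xs where cyc: "is_cycle V F xs" by blast
    then have "3 \<le> length xs" "distinct xs" unfolding is_cycle_def by auto
    then have "xs ! 0 \<noteq> xs ! 1" using nth_eq_iff_index_eq[of xs 0 1] by linarith
    moreover have "xs ! 0 \<in> set xs" "xs ! 1 \<in> set xs" using \<open>3 \<le> length xs\<close> nth_mem[of 0 xs] nth_mem[of 1 xs] by linarith+
    ultimately obtain y where y: "y \<in> set xs" "y \<noteq> c" by blast
    obtain a b where "a \<noteq> b" "{y, a} \<in> F" "{y, b} \<in> F" using cycle_two_nbrs[OF cyc y(1)] by blast
    then show False using nbF y(2) by blast
  qed
  have tree: "is_tree V F" unfolding is_tree_def using g conn acyc assms(2) by blast
  have dc: "{u \<in> V. {u, c} \<in> F} = V - {c}"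
    unfolding F_def by (auto simp: doubleton_eq_iff insert_commute)
  have dy: "{u \<in> V. {u, y} \<in> F} = {c}" if "y \<in> V" "y \<noteq> c" for y
    unfolding F_def using that assms(2) by (auto simp: doubleton_eq_iff)
  have br: "branching (k + 1) V F"
    unfolding branching_def degree_def
  proof (intro ballI impI)
    fix v assume v: "v \<in> V" "card {u \<in> V. {u, v} \<in> F} \<noteq> 1"
    then have "v = c" using dy by fastforce
    then show "k + 1 \<le> card {u \<in> V. {u, v} \<in> F}"
      using dc assms(2,4) fin by (simp add: card_Diff_singleton)
  qed
  show ?thesis using sub tree br by blast
qed



lemma extend_tree:
  assumes G: "is_graph V E"
    and D: "D \<subseteq> V" "u \<in> V" "u \<notin> D" "k \<le> card D" "\<forall>x\<in>D. gdist V E u x \<le> k"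
    and E': "E' \<subseteq> E" "connected_graph (V - D) E'"
    and F': "F' \<subseteq> graph_power (V - D) E' k" "is_tree (V - D) F'" "branching (k + 1) (V - D) F'"
  shows "\<exists>F. F \<subseteq> graph_power V E k \<and> is_tree V F \<and> branching (k + 1) V F"
proof -
  define W where "W = V - D"
  define F where "F = F' \<union> {{u, x} | x. x \<in> D}"
  have fin: "finite V" using G unfolding is_graph_def by blast
  have uW: "u \<in> W" using D unfolding W_def by blast
  have gF': "is_graph W F'" using F'(2) unfolding is_tree_def W_def by blast
  have inW: "p \<in> W" if "e \<in> F'" "p \<in> e" for e p
    using gF' that unfolding is_graph_def by fastforce
  have pairW: "p \<in> W" "q \<in> W" if "{p, q} \<in> F'" for p q
    using inW[OF that] by auto
  have distle: "gdist V E a b \<le> gdist W E' a b" if ab: "a \<in> W" "b \<in> W" for a b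
  proof -
    obtain xs where xs: "walk W E' xs" "hd xs = a" "last xs = b" "length xs = Suc (gdist W E' a b)"
      using gdist_wit[of W E' a b] E'(2) ab unfolding W_def by blast
    have "walk V E xs" by (rule walk_mono[OF xs(1)]) (use E'(1) in \<open>auto simp: W_def\<close>)
    then show ?thesis using gdist_le[of V E xs a b "gdist W E' a b"] xs by blast
  qed
  have sub: "F \<subseteq> graph_power V E k"
  proof
    fix e assume "e \<in> F"
    then consider "e \<in> F'" | x where "x \<in> D" "e = {u, x}" unfolding F_def by blast
    then show "e \<in> graph_power V E k"
    proof cases
      case 1
      then obtain a b where ab: "a \<in> W" "b \<in> W" "a \<noteq> b" "gdist W E' a b \<le> k" "e = {a, b}"
        using F'(1) unfolding graph_power_def W_def by blast
      then have "gdist V E a b \<le> k" using distle[of a b] by linarith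
      then show ?thesis using ab unfolding graph_power_def W_def by blast
    next
      case 2
      then have "u \<noteq> x" "x \<in> V" "gdist V E u x \<le> k" using D by auto
      then show ?thesis using 2 D(2) unfolding graph_power_def by blast
    qed
  qed
  have gF: "is_graph V F"
    unfolding is_graph_def
  proof (intro conjI ballI)
    show "finite V" by (rule fin)
    fix e assume "e \<in> F"
    then consider "e \<in> F'" | x where "x \<in> D" "e = {u, x}" unfolding F_def by blast
    then show "\<exists>a b. a \<in> V \<and> b \<in> V \<and> a \<noteq> b \<and> e = {a, b}"
    proof cases
      case 1 then show ?thesis using gF' unfolding is_graph_def W_def by blast
    next
      case 2 then show ?thesis using D by blast
    qed
  qed
  have conn: "connected_graph V F"
  proof (rule connected_via_root[OF D(2)])
    fix y assume y: "y \<in> V"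
    show "\<exists>xs. walk V F xs \<and> hd xs = y \<and> last xs = u"
    proof (cases "y \<in> D")
      case True
      have "{y, u} \<in> F" unfolding F_def using True by (auto simp: insert_commute)
      then show ?thesis using y D(2) by (intro exI[of _ "[y, u]"]) simp
    next
      case False
      then have "y \<in> W" using y unfolding W_def by blast
      then obtain xs where xs: "walk W F' xs" "hd xs = y" "last xs = u"
        using F'(2) uW unfolding is_tree_def connected_graph_def W_def by blast
      have "walk V F xs" by (rule walk_mono[OF xs(1)]) (auto simp: W_def F_def)
      then show ?thesis using xs by blast
    qed
  qed
  have nbD: "a = u" if h: "{x, a} \<in> F" "x \<in> D" for x a
  proof -
    have "{x, a} \<notin> F'" using pairW[of x a] h(2) unfolding W_def by blast
    then obtain x' where "x' \<in> D" "{x, a} = {u, x'}" using h(1) unfolding F_def by blast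
    then show ?thesis using D(3) h(2) by (auto simp: doubleton_eq_iff)
  qed
  have acyc: "\<not> (\<exists>xs. is_cycle V F xs)"
  proof
    assume "\<exists>xs. is_cycle V F xs"
    then obtain xs where cyc: "is_cycle V F xs" by blast
    show False
    proof (cases "\<exists>x\<in>set xs. x \<in> D")
      case True
      then obtain x where x: "x \<in> set xs" "x \<in> D" by blast
      obtain a b where "a \<noteq> b" "{x, a} \<in> F" "{x, b} \<in> F" using cycle_two_nbrs[OF cyc x(1)] by blast
      then show False using nbD x(2) by blast
    next
      case False
      then have sW: "set xs \<subseteq> W" using cyc unfolding is_cycle_def walk_def W_def by blast
      have toF': "{p, q} \<in> F'" if h: "{p, q} \<in> F" "p \<in> W" "q \<in> W" for p q
      proof (rule ccontr)
        assume "{p, q} \<notin> F'"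
        then obtain x where "x \<in> D" "{p, q} = {u, x}" using h(1) unfolding F_def by blast
        then show False using h(2,3) unfolding W_def by (auto simp: doubleton_eq_iff)
      qed
      have "is_cycle W F' xs" unfolding is_cycle_def walk_def
      proof (intro conjI allI impI)
        show "3 \<le> length xs" "distinct xs" "xs \<noteq> []" "set xs \<subseteq> W"
          using cyc sW unfolding is_cycle_def walk_def by auto
        fix i assume i: "Suc i < length xs"
        then have "{xs ! i, xs ! Suc i} \<in> F" using cyc unfolding is_cycle_def walk_def by blast
        moreover have "xs ! i \<in> W" "xs ! Suc i \<in> W" using sW i by auto
        ultimately show "{xs ! i, xs ! Suc i} \<in> F'" using toF' by blast
      next
        have ne: "xs \<noteq> []" using cyc unfolding is_cycle_def walk_def by blast
        have "{last xs, hd xs} \<in> F" using cyc unfolding is_cycle_def by blast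
        moreover have "last xs \<in> W" "hd xs \<in> W" using sW ne by auto
        ultimately show "{last xs, hd xs} \<in> F'" using toF' by blast
      qed
      then show False using F'(2) unfolding is_tree_def W_def by blast
    qed
  qed
  have tree: "is_tree V F" unfolding is_tree_def using gF conn acyc D(2) by blast
  have N_D: "{w \<in> V. {w, v} \<in> F} = {u}" if "v \<in> D" for v
  proof -
    have "w = u" if "w \<in> V" "{w, v} \<in> F" for w
      using nbD[of v w] that \<open>v \<in> D\<close> by (simp add: insert_commute)
    moreover have "{u, v} \<in> F" unfolding F_def using that by blast
    ultimately show ?thesis using D(2) by blast
  qed
  have N_W: "{w \<in> V. {w, v} \<in> F} = {w \<in> W. {w, v} \<in> F'}" if "v \<in> W" "v \<noteq> u" for v
  proof -
    have "{w, v} \<in> F'" if "{w, v} \<in> F" for w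
      using that \<open>v \<in> W\<close> \<open>v \<noteq> u\<close> unfolding F_def W_def by (auto simp: doubleton_eq_iff)
    then show ?thesis using pairW unfolding F_def W_def by auto
  qed
  have N_u: "{w \<in> V. {w, u} \<in> F} = {w \<in> W. {w, u} \<in> F'} \<union> D"
  proof -
    have "w \<in> D" if "{w, u} \<in> F" "{w, u} \<notin> F'" for w
      using that D(3) unfolding F_def by (auto simp: doubleton_eq_iff)
    moreover have "{w, u} \<in> F" if "w \<in> D" for w
      using that unfolding F_def by (auto simp: insert_commute)
    ultimately show ?thesis using pairW D(1) unfolding F_def W_def by auto
  qed
  have br: "branching (k + 1) V F"
    unfolding branching_def degree_def
  proof (intro ballI impI)
    fix v assume v: "v \<in> V" "card {w \<in> V. {w, v} \<in> F} \<noteq> 1"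
    have vnD: "v \<notin> D" using v N_D by fastforce
    then have vW: "v \<in> W" using v unfolding W_def by blast
    show "k + 1 \<le> card {w \<in> V. {w, v} \<in> F}"
    proof (cases "v = u")
      case False
      then show ?thesis using N_W[OF vW False] v F'(3) vW unfolding branching_def degree_def W_def
        by auto
    next
      case True
      have finW: "finite W" using fin unfolding W_def by blast
      have fD: "finite D" using fin D(1) finite_subset by blast
      have disj: "{w \<in> W. {w, u} \<in> F'} \<inter> D = {}" unfolding W_def by blast
      have c: "card {w \<in> V. {w, u} \<in> F} = card {w \<in> W. {w, u} \<in> F'} + card D"
        unfolding N_u by (rule card_Un_disjoint) (use finW fD disj in auto)
      have "card {w \<in> W. {w, u} \<in> F'} = 1 \<or> k + 1 \<le> card {w \<in> W. {w, u} \<in> F'}"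
        using F'(3) uW unfolding branching_def degree_def W_def by blast
      then show ?thesis using c True D(4) by auto
    qed
  qed
  show ?thesis using sub tree br by blast
qed



lemma gdist_mono:
  assumes "connected_graph W E'" "a \<in> W" "b \<in> W" "W \<subseteq> V" "E' \<subseteq> E"
  shows "gdist V E a b \<le> gdist W E' a b"
proof -
  obtain xs where xs: "walk W E' xs" "hd xs = a" "last xs = b" "length xs = Suc (gdist W E' a b)"
    using gdist_wit[OF assms(1-3)] by blast
  have "walk V E xs" by (rule walk_mono[OF xs(1) assms(4,5)])
  then show ?thesis using gdist_le[of V E xs a b "gdist W E' a b"] xs by blast
qed

lemma main_conn:
  assumes k1: "1 \<le> k"
  shows "is_graph V E \<Longrightarrow> connected_graph V E \<Longrightarrow> k + 2 \<le> card V \<Longrightarrow>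
    \<exists>F. F \<subseteq> graph_power V E k \<and> is_tree V F \<and> branching (k + 1) V F"
proof (induction "card V" arbitrary: V E rule: less_induct)
  case less
  have fin: "finite V" using less.prems(1) unfolding is_graph_def by blast
  have Vne: "V \<noteq> {}" using less.prems(3) by auto
  note conn = less.prems(2)
  show ?case
  proof (cases "\<exists>c\<in>V. \<forall>y\<in>V. gdist V E c y \<le> k")
    case True
    then obtain c where "c \<in> V" "\<forall>y\<in>V. gdist V E c y \<le> k" by blast
    then show ?thesis using star_tree[OF less.prems(1)] less.prems(3) by blast
  next
    case False
    obtain z where z: "z \<in> V" using Vne by blast
    define f where "f = gdist V E z"
    define h where "h = Max (f ` V)"
    have fle: "f y \<le> h" if "y \<in> V" for y unfolding h_def using fin that by simp
    have "h \<in> f ` V" unfolding h_def using Max_in[of "f ` V"] fin Vne by blast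
    then obtain x0 where x0: "x0 \<in> V" "f x0 = h" by blast
    obtain ws where ws: "walk V E ws" "hd ws = z" "last ws = x0" "length ws = Suc (gdist V E z x0)"
      using gdist_wit[OF conn z x0(1)] by blast
    have wsV: "ws ! i \<in> V" if "i \<le> h" for i
      using ws(1,4) x0(2) that unfolding walk_def f_def by (auto simp: less_Suc_eq_le)
    have fws: "f (ws ! i) = i" if "i \<le> h" for i
      using shortest_walk_dist[OF conn ws, of i] that x0(2) unfolding f_def by simp
    have hk: "k < h"
    proof (rule ccontr)
      assume "\<not> k < h"
      then have "\<forall>y\<in>V. gdist V E z y \<le> k" using fle unfolding f_def by fastforce
      then show False using False z by blast
    qed
    define u where "u = ws ! (h - k)"
    have uV: "u \<in> V" unfolding u_def using wsV by simp
    have fu: "f u = h - k" unfolding u_def using fws by simp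
    define D where "D = {y \<in> V. f u < f y \<and> f y = f u + gdist V E u y}"
    have DV: "D \<subseteq> V" unfolding D_def by blast
    have uD: "u \<notin> D" unfolding D_def by simp
    have fz: "f z = 0" unfolding f_def using gdist_le[of V E "[z]" z z 0] z by simp
    have zD: "z \<notin> D" unfolding D_def using fz by simp
    have Dk: "\<forall>x\<in>D. gdist V E u x \<le> k"
    proof
      fix x assume "x \<in> D"
      then have "x \<in> V" "f x = f u + gdist V E u x" unfolding D_def by auto
      then show "gdist V E u x \<le> k" using fle[of x] fu hk by linarith
    qed
    have finD: "finite D" using fin DV finite_subset by blast
    have cardD: "k \<le> card D"
    proof -
      let ?I = "{h - k + 1..h}"
      have inj: "inj_on (\<lambda>i. ws ! i) ?I"
      proof (rule inj_onI)
        fix i j assume ij: "i \<in> ?I" "j \<in> ?I" "ws ! i = ws ! j"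
        have "i = f (ws ! i)" using fws[of i] ij(1) by simp
        also have "\<dots> = f (ws ! j)" unfolding ij(3) ..
        also have "\<dots> = j" using fws[of j] ij(2) by simp
        finally show "i = j" .
      qed
      have subD: "(\<lambda>i. ws ! i) ` ?I \<subseteq> D"
      proof
        fix x assume "x \<in> (\<lambda>i. ws ! i) ` ?I"
        then obtain i where i: "i \<in> ?I" "x = ws ! i" by blast
        have iV: "ws ! i \<in> V" using wsV i(1) by simp
        have fi: "f (ws ! i) = i" using fws i(1) by simp
        have seg: "gdist V E u (ws ! i) \<le> i - (h - k)"
          unfolding u_def by (rule shortest_walk_seg[OF ws(1)]) (use i(1) ws(4) x0(2) f_def in auto)
        have tri: "f (ws ! i) \<le> f u + gdist V E u (ws ! i)"
          unfolding f_def by (rule gdist_tri[OF conn z uV iV])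
        have "f u < f (ws ! i)" "f (ws ! i) = f u + gdist V E u (ws ! i)"
          using fi fu seg tri i(1) hk by auto
        then show "x \<in> D" unfolding D_def using iV i(2) by blast
      qed
      have "card ?I \<le> card D" using card_inj_on_le[OF inj subD finD] .
      moreover have "card ?I = k" using hk by simp
      ultimately show ?thesis by simp
    qed
    define W where "W = V - D"
    define E' where "E' = {e \<in> E. e \<subseteq> W}"
    have zW: "z \<in> W" "u \<in> W" using z zD uV uD unfolding W_def by auto
    have gW: "is_graph W E'"
      using less.prems(1) fin unfolding is_graph_def E'_def W_def by fastforce
    have reach: "\<forall>y\<in>W. f y = n \<longrightarrow> (\<exists>xs. walk W E' xs \<and> hd xs = y \<and> last xs = z)" for n
    proof (induction n)
      case 0
      show ?case
      proof (intro ballI impI)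
        fix y assume "y \<in> W" "f y = 0"
        then have "y = z" using gdist_0[OF conn z] unfolding W_def f_def by auto
        then show "\<exists>xs. walk W E' xs \<and> hd xs = y \<and> last xs = z"
          using zW by (intro exI[of _ "[z]"]) simp
      qed
    next
      case (Suc n)
      show ?case
      proof (intro ballI impI)
        fix y assume y: "y \<in> W" "f y = Suc n"
        have yV: "y \<in> V" using y unfolding W_def by blast
        obtain wy where wy: "walk V E wy" "hd wy = z" "last wy = y" "length wy = Suc (gdist V E z y)"
          using gdist_wit[OF conn z yV] by blast
        have len: "length wy = Suc (Suc n)" using wy(4) y(2) unfolding f_def by simp
        define p where "p = wy ! n"
        have pV: "p \<in> V" using wy(1) len unfolding walk_def p_def by auto
        have fp: "f p = n" unfolding p_def f_def
          using shortest_walk_dist[OF conn wy, of n] y(2) unfolding f_def by simp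
        have "{wy ! n, wy ! Suc n} \<in> E" using wy(1) len unfolding walk_def by auto
        moreover have "wy ! Suc n = y"
        proof -
          have "wy \<noteq> []" using len by auto
          then have "last wy = wy ! (length wy - 1)" by (rule last_conv_nth)
          then show ?thesis using wy(3) len by simp
        qed
        ultimately have ep: "{p, y} \<in> E" unfolding p_def by simp
        have pD: "p \<notin> D"
        proof
          assume "p \<in> D"
          then have 1: "f u < f p" "f p = f u + gdist V E u p" unfolding D_def by auto
          have "gdist V E u y \<le> gdist V E u p + gdist V E p y" by (rule gdist_tri[OF conn uV pV yV])
          moreover have "gdist V E p y \<le> 1" by (rule gdist_edge[OF ep pV yV])
          moreover have "f y \<le> f u + gdist V E u y" unfolding f_def by (rule gdist_tri[OF conn z uV yV])
          ultimately have "f u < f y \<and> f y = f u + gdist V E u y" using 1 fp y(2) by linarith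
          then have "y \<in> D" unfolding D_def using yV by blast
          then show False using y(1) unfolding W_def by blast
        qed
        then have pW: "p \<in> W" using pV unfolding W_def by blast
        then obtain xs where xs: "walk W E' xs" "hd xs = p" "last xs = z" using Suc.IH fp by blast
        have xne: "xs \<noteq> []" using xs(1) walk_nonempty by blast
        have "{y, p} \<in> E'" using ep y(1) pW unfolding E'_def by (auto simp: insert_commute)
        then have "walk W E' ([y] @ xs)" using xs xne y(1) by (subst walk_append) auto
        then show "\<exists>xs. walk W E' xs \<and> hd xs = y \<and> last xs = z"
          using xs xne by (intro exI[of _ "[y] @ xs"]) simp
      qed
    qed
    have connW: "connected_graph W E'"
      by (rule connected_via_root[OF zW(1)]) (use reach in blast)
    have EE': "E' \<subseteq> E" unfolding E'_def by blast
    have WV: "W \<subseteq> V" unfolding W_def by blast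
    obtain y where y: "y \<in> V" "k < gdist V E u y" using False uV by (meson not_le)
    have yW: "y \<in> W" using y Dk unfolding W_def by fastforce
    have "gdist V E u y \<le> gdist W E' u y" by (rule gdist_mono[OF connW zW(2) yW WV EE'])
    moreover have "Suc (gdist W E' u y) \<le> card W" by (rule card_ge_gdist[OF gW connW zW(2) yW])
    ultimately have cW: "k + 2 \<le> card W" using y(2) by linarith
    have "D \<noteq> {}" using cardD k1 by auto
    then have "W \<subset> V" unfolding W_def using DV by blast
    then have lt: "card W < card V" using psubset_card_mono fin by blast
    obtain F' where F': "F' \<subseteq> graph_power W E' k" "is_tree W F'" "branching (k + 1) W F'"
      using less.hyps[OF lt gW connW cW] by blast
    show ?thesis
      by (rule extend_tree[OF less.prems(1) DV uV uD cardD Dk EE'])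
         (use connW F' in \<open>simp_all add: W_def\<close>)
  qed
qed


theorem mainTheorem1:
  fixes V :: "'a set" and E :: "'a set set" and d k :: nat
  assumes "is_tree V E"
    and "diameter V E = d"
    and "1 \<le> k" and "k + 1 \<le> d"
  shows "\<exists>F. spanning_tree V (graph_power V E k) F \<and> branching (k + 1) V F"
proof -
  have g: "is_graph V E" and c: "connected_graph V E" and ne: "V \<noteq> {}"
    using assms(1) unfolding is_tree_def by auto
  have fin: "finite V" using g unfolding is_graph_def by blast
  let ?S = "{gdist V E u v | u v. u \<in> V \<and> v \<in> V}"
  have "?S = (\<lambda>(u, v). gdist V E u v) ` (V \<times> V)" by auto
  then have finS: "finite ?S" using fin by simp
  have neS: "?S \<noteq> {}" using ne by blast
  have "d \<in> ?S" using Max_in[OF finS neS] assms(2) unfolding diameter_def by simp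
  then obtain u v where uv: "u \<in> V" "v \<in> V" "gdist V E u v = d" by blast
  have "Suc d \<le> card V" using card_ge_gdist[OF g c uv(1,2)] uv(3) by simp
  then have "k + 2 \<le> card V" using assms(4) by linarith
  then obtain F where "F \<subseteq> graph_power V E k" "is_tree V F" "branching (k + 1) V F"
    using main_conn[OF assms(3) g c] by blast
  then show ?thesis unfolding spanning_tree_def by blast
qed

end
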